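(* Let $n\in\mathbb{N}_+$, $n\ge 3$, and \[ \phi_n(x):=(n+1)\int_0^1 t(1-t)^{n(1-x)}\frac{(1-t)^{nx}-t^{nx}}{1-2t}\,dt,\quad x\in[0,1]. \] Then $0\le\phi_n(x)\le \frac{4}{n}$ for all $x\in\left[0,1-\frac1n\right]$. *)

theory Defs
  imports "HOL-Analysis.Analysis"
begin

definition phi :: "nat \<Rightarrow> real \<Rightarrow> real" where
  "phi n x = real (n + 1) * integral {0..1}
     (\<lambda>t. t * (1 - t) powr (real n * (1 - x)) *
          (((1 - t) powr (real n * x) - t powr (real n * x)) / (1 - 2 * t)))"

end

theory Submission imports Defs begin
lemma beta_nat:
  assumes "1 \<le> p" "1 \<le> q"
  shows "((\<lambda>t::real. t^p * (1-t)^q) has_integral (fact p * fact q / fact (p+q+1))) {0..1}"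
proof -
  have h: "((\<lambda>t. t powr (real p + 1 - 1) * (1 - t) powr (real q + 1 - 1)) has_integral Beta (real p + 1) (real q + 1)) {0..1}"
    by (rule has_integral_Beta_real) auto
  have B: "Beta (real p + 1) (real q + 1) = fact p * fact q / fact (p+q+1)"
  proof -
    have g1: "Gamma (1 + real p) = (fact p :: real)" by (rule Gamma_fact)
    have g2: "Gamma (1 + real q) = (fact q :: real)" by (rule Gamma_fact)
    have g3: "Gamma (1 + real (p+q+1)) = (fact (p+q+1) :: real)" by (rule Gamma_fact)
    have e: "real p + 1 + (real q + 1) = 1 + real (p+q+1)" by simp
    show ?thesis unfolding Beta_def e using g1 g2 g3 by (simp add: add.commute)
  qed
  have "((\<lambda>t::real. t^p * (1-t)^q) has_integral Beta (real p + 1) (real q + 1)) {0..1}"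
  proof (subst has_integral_cong)
    fix t :: real assume t: "t \<in> {0..1}"
    show "t^p * (1-t)^q = t powr (real p + 1 - 1) * (1 - t) powr (real q + 1 - 1)"
    proof -
      have "t powr real p = t^p" using t assms
        by (cases "t = 0") (auto simp: powr_realpow)
      moreover have "(1-t) powr real q = (1-t)^q" using t assms
        by (cases "t = 1") (auto simp: powr_realpow)
      ultimately show ?thesis by simp
    qed
  qed (rule h)
  then show ?thesis using B by simp
qed

lemma pointwise:
  fixes a b t :: real and n :: nat
  assumes n: "n \<ge> 3" and a: "0 \<le> a" and b: "1 \<le> b" and ab: "a + b = real n"
    and t: "0 \<le> t" "t \<le> 1"
  shows "0 \<le> t * (1-t) powr b * (((1-t) powr a - t powr a)/(1-2*t)) \<and>
         t * (1-t) powr b * (((1-t) powr a - t powr a)/(1-2*t))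
           \<le> t * (1-t) * (\<Sum>k<n-1. t^(n-1-Suc k) * (1-t)^k)"
proof -
  define u where "u = 1 - t"
  define S where "S = (\<Sum>k<n-1. t^(n-1-Suc k) * (1-t)^k)"
  have S0: "0 \<le> S" unfolding S_def using t by (intro sum_nonneg) auto
  have P0: "0 \<le> t * (1-t) * S" using t S0 by simp
  show ?thesis
  proof (cases "t = 0 \<or> t = 1 \<or> t = 1/2")
    case True
    then consider "t = 0" | "t = 1" | "t = 1/2" by blast
    then show ?thesis
    proof cases
      case 3
      then have "1 - 2*t = 0" by simp
      then show ?thesis using P0 S_def by simp
    qed (use P0 S_def in auto)
  next
    case False
    then have t0: "0 < t" and t1: "t < 1" and th: "t \<noteq> 1/2" using t by auto
    have u0: "0 < u" using t1 u_def by simp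
    define K where "K = u powr b * t powr a"
    define M where "M = u * t^(n-1)"
    have un: "u powr b * u powr a = u^n"
      using u0 ab by (simp add: powr_add[symmetric] powr_realpow add.commute)
    have ub: "u powr b = u * u powr (b-1)"
    proof -
      have "u powr b = u powr (1 + (b-1))" by simp
      also have "\<dots> = u powr 1 * u powr (b-1)" by (rule powr_add)
      finally show ?thesis using u0 by simp
    qed
    have tn: "t^(n-1) = t powr a * t powr (b-1)"
    proof -
      have "real (n-1) = a + (b-1)" using ab n by auto
      then have "t powr real (n-1) = t powr a * t powr (b-1)"
        by (simp add: powr_add)
      then show ?thesis using t0 by (simp add: powr_realpow)
    qed
    have K_eq: "K = u * t powr a * u powr (b-1)" unfolding K_def ub by simp
    have M_eq: "M = u * t powr a * t powr (b-1)" unfolding M_def tn by simp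
    have lhs: "t * (1-t) powr b * (((1-t) powr a - t powr a)/(1-2*t)) = t * (u^n - K) / (1 - 2*t)"
      unfolding K_def u_def[symmetric] un[symmetric] by (simp add: algebra_simps)
    have geo: "u^(n-1) - t^(n-1) = (u - t) * S"
      unfolding S_def u_def by (rule power_diff_sumr2)
    have rhs: "t * (u^n - M) / (1 - 2*t) = t * (1-t) * S"
    proof -
      have "u^n = u * u^(n-1)" using n by (simp add: power_eq_if)
      then have "u^n - M = u * (u^(n-1) - t^(n-1))" unfolding M_def by (simp add: algebra_simps)
      also have "\<dots> = u * (1 - 2*t) * S" using geo u_def by simp
      finally have "u^n - M = u * (1 - 2*t) * S" .
      moreover have "1 - 2*t \<noteq> 0" using th by simp
      ultimately show ?thesis using u_def by simp
    qed
    show ?thesis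
    proof (cases "t < 1/2")
      case True
      have d: "0 < 1 - 2*t" using True by simp
      have tu: "t \<le> u" using True u_def by simp
      have "t powr (b-1) \<le> u powr (b-1)" using tu t0 b by (intro powr_mono2) auto
      then have MK: "M \<le> K" unfolding K_eq M_eq using u0 t0
        by (intro mult_left_mono) auto
      have "t powr a \<le> u powr a" using tu t0 a by (intro powr_mono2) auto
      then have KU: "K \<le> u^n" unfolding K_def un[symmetric] using u0
        by (intro mult_left_mono) auto
      have "0 \<le> t * (u^n - K) / (1 - 2*t)" using KU t0 d by simp
      moreover have "t * (u^n - K) / (1 - 2*t) \<le> t * (u^n - M) / (1 - 2*t)"
        using MK t0 d by (intro divide_right_mono mult_left_mono) auto
      ultimately show ?thesis unfolding lhs S_def[symmetric] using rhs by linarith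
    next
      case False
      then have d: "1 - 2*t < 0" using th by simp
      have tu: "u \<le> t" using False u_def by simp
      have "u powr (b-1) \<le> t powr (b-1)" using tu u0 b by (intro powr_mono2) auto
      then have MK: "K \<le> M" unfolding K_eq M_eq using u0 t0
        by (intro mult_left_mono) auto
      have "u powr a \<le> t powr a" using tu u0 a by (intro powr_mono2) auto
      then have KU: "u^n \<le> K" unfolding K_def un[symmetric] using u0
        by (intro mult_left_mono) auto
      have e1: "t * (u^n - K) / (1 - 2*t) = t * (K - u^n) / (2*t - 1)"
        by (simp add: divide_simps) (simp add: algebra_simps)
      have e2: "t * (u^n - M) / (1 - 2*t) = t * (M - u^n) / (2*t - 1)"
        by (simp add: divide_simps) (simp add: algebra_simps)
      have "0 \<le> t * (K - u^n) / (2*t - 1)" using KU t0 d by simp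
      moreover have "t * (K - u^n) / (2*t - 1) \<le> t * (M - u^n) / (2*t - 1)"
        using MK t0 d by (intro divide_right_mono mult_left_mono) auto
      ultimately show ?thesis unfolding lhs S_def[symmetric] using rhs e1 e2 by linarith
    qed
  qed
qed

lemma choose2_real: "real (n choose 2) = real n * (real n - 1) / 2"
proof (cases n)
  case (Suc m)
  have "real (n choose 2) = real (n - 1) * real n / 2"
    by (auto simp add: choose_two field_char_0_class.of_nat_div mod_eq_0_iff_dvd mult.commute)
  then show ?thesis using Suc by simp
qed simp

lemma comb:
  assumes n: "n \<ge> 3"
  shows "(\<Sum>k<n-1. 1 / real (n choose (k+1))) \<le> 4 / real n"
proof -
  define h where "h k = (if k = 0 \<or> k = n-2 then 1 / real n else 0) + 2 / (real n * (real n - 1))" for k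
  have le: "1 / real (n choose (k+1)) \<le> h k" if k: "k < n-1" for k
  proof (cases "k = 0 \<or> k = n-2")
    case True
    then have "n choose (k+1) = n"
    proof
      assume "k = n-2"
      then have "k + 1 = n - 1" using n by simp
      have "n choose (n-1) = n choose (n - (n-1))" by (rule binomial_symmetric) simp
      then show ?thesis using n \<open>k + 1 = n - 1\<close> by simp
    qed simp
    then show ?thesis unfolding h_def using True n by simp
  next
    case False
    then have k2: "2 \<le> k+1" "k+1 \<le> n-2" using k by auto
    have "n choose 2 \<le> n choose (k+1)"
    proof (cases "2*(k+1) \<le> n")
      case True
      then show ?thesis using k2 by (intro binomial_mono) auto
    next
      case False
      have "n choose 2 \<le> n choose (n - (k+1))" using False k2 by (intro binomial_mono) auto
      also have "\<dots> = n choose (k+1)" using k2 by (intro binomial_symmetric[symmetric]) auto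
      finally show ?thesis .
    qed
    then have "real (n choose 2) \<le> real (n choose (k+1))" by simp
    then have c: "real n * (real n - 1) / 2 \<le> real (n choose (k+1))" by (simp add: choose2_real)
    have pos: "0 < real n * (real n - 1) / 2" using n by simp
    have "1 / real (n choose (k+1)) \<le> 1 / (real n * (real n - 1) / 2)"
      using c pos k by (intro divide_left_mono) (auto intro!: mult_pos_pos)
    then show ?thesis unfolding h_def using False by simp
  qed
  have "(\<Sum>k<n-1. 1 / real (n choose (k+1))) \<le> (\<Sum>k<n-1. h k)"
    by (intro sum_mono le) auto
  also have "\<dots> = 4 / real n"
  proof -
    have A: "{..<n-1} \<inter> {k. k = 0 \<or> k = n-2} = {0, n-2}" using n by auto
    have "(\<Sum>k<n-1. h k) = (\<Sum>k<n-1. (if k = 0 \<or> k = n-2 then 1 / real n else 0))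
        + (\<Sum>k<n-1. 2 / (real n * (real n - 1)))"
      unfolding h_def by (rule sum.distrib)
    also have "(\<Sum>k<n-1. (if k = 0 \<or> k = n-2 then 1 / real n else 0)) = 2 / real n"
      unfolding sum.If_cases[OF finite_lessThan] A using n by simp
    also have "(\<Sum>k<n-1. 2 / (real n * (real n - 1))) = 2 / real n"
      using n by (simp add: of_nat_diff field_simps)
    finally show ?thesis by simp
  qed
  finally show ?thesis .
qed

theorem lemma2p5:
  fixes n :: nat and x :: real
  assumes "n \<ge> 3" and "0 \<le> x" and "x \<le> 1 - 1 / real n"
  shows "0 \<le> phi n x \<and> phi n x \<le> 4 / real n"
proof -
  define a where "a = real n * x"
  define b where "b = real n * (1 - x)"
  have n3: "real n \<ge> 3" using assms(1) by simp
  have a0: "0 \<le> a" unfolding a_def using assms(2) by simp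
  have b1: "1 \<le> b"
  proof -
    have "real n * (1 / real n) \<le> real n * (1 - x)"
      using assms(3) n3 by (intro mult_left_mono) auto
    then show ?thesis unfolding b_def using n3 by simp
  qed
  have ab: "a + b = real n" unfolding a_def b_def by (simp add: algebra_simps)
  define f where "f = (\<lambda>t::real. t * (1 - t) powr b * (((1 - t) powr a - t powr a) / (1 - 2 * t)))"
  define P where "P = (\<lambda>t::real. t * (1-t) * (\<Sum>k<n-1. t^(n-1-Suc k) * (1-t)^k))"
  have phi_eq: "phi n x = real (n+1) * integral {0..1} f"
    unfolding phi_def f_def a_def b_def by simp
  have fP: "0 \<le> f t \<and> f t \<le> P t" if "t \<in> {0..1}" for t
    using pointwise[OF assms(1) a0 b1 ab] that unfolding f_def P_def by auto
  define I where "I k = (fact (n-1-k) * fact (k+1) / fact (n+1) :: real)" for k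
  have P_int: "(P has_integral (\<Sum>k<n-1. I k)) {0..1}"
  proof -
    have "((\<lambda>t. \<Sum>k<n-1. t^(n-1-k) * (1-t)^(k+1)) has_integral (\<Sum>k<n-1. I k)) {0..1}"
    proof (intro has_integral_sum)
      fix k assume "k \<in> {..<n-1}"
      then have k: "k < n-1" by simp
      have "((\<lambda>t::real. t^(n-1-k) * (1-t)^(k+1)) has_integral
             (fact (n-1-k) * fact (k+1) / fact ((n-1-k)+(k+1)+1))) {0..1}"
        using k by (intro beta_nat) auto
      moreover have "(n-1-k)+(k+1)+1 = n+1" using k by simp
      ultimately show "((\<lambda>t::real. t^(n-1-k) * (1-t)^(k+1)) has_integral I k) {0..1}"
        unfolding I_def by simp
    qed simp
    moreover have h2: "P t = (\<Sum>k<n-1. t^(n-1-k) * (1-t)^(k+1))" for t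
      unfolding P_def sum_distrib_left
    proof (intro sum.cong refl)
      fix k assume "k \<in> {..<n-1}"
      then have "n-1-k = Suc (n-1-Suc k)" by simp
      then show "t * (1-t) * (t^(n-1-Suc k) * (1-t)^k) = t^(n-1-k) * (1-t)^(k+1)"
        by (simp add: algebra_simps)
    qed
    moreover have "P = (\<lambda>t. \<Sum>k<n-1. t^(n-1-k) * (1-t)^(k+1))"
      by (rule ext) (rule h2)
    ultimately show ?thesis by simp
  qed
  have I0: "0 \<le> I k" for k unfolding I_def by simp
  have key: "real (n+1) * I k = 1 / real (n choose (k+1))" if k: "k < n-1" for k
  proof -
    define j where "j = k+1"
    have j: "j \<le> n" "n-1-k = n-j" using k unfolding j_def by auto
    have fl: "fact j * fact (n-j) * real (n choose j) = fact n"
      using binomial_fact_lemma[OF j(1)] by (metis of_nat_fact of_nat_mult)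
    have C0: "real (n choose j) > 0" using j by simp
    have "real (n+1) * I k = real (n+1) * (fact (n-j) * fact j / (real (n+1) * fact n))"
      unfolding I_def j(2) j_def[symmetric] by (simp add: algebra_simps)
    also have "\<dots> = fact (n-j) * fact j / fact n" by simp
    also have "\<dots> = fact (n-j) * fact j / (fact j * fact (n-j) * real (n choose j))"
      unfolding fl ..
    also have "\<dots> = 1 / real (n choose j)" by simp
    finally show ?thesis unfolding j_def .
  qed
  have intle: "0 \<le> integral {0..1} f \<and> integral {0..1} f \<le> (\<Sum>k<n-1. I k)"
  proof (cases "f integrable_on {0..1}")
    case True
    have "0 \<le> integral {0..1} f" using True fP by (intro integral_nonneg) auto
    moreover have "integral {0..1} f \<le> integral {0..1} P"
      using True P_int fP by (intro integral_le) auto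
    ultimately show ?thesis using P_int by (simp add: integral_unique)
  next
    case False
    then show ?thesis using I0 by (simp add: not_integrable_integral sum_nonneg)
  qed
  have "real (n+1) * (\<Sum>k<n-1. I k) = (\<Sum>k<n-1. 1 / real (n choose (k+1)))"
    unfolding sum_distrib_left by (intro sum.cong refl key) simp
  also have "\<dots> \<le> 4 / real n" by (rule comb[OF assms(1)])
  finally have up: "real (n+1) * (\<Sum>k<n-1. I k) \<le> 4 / real n" .
  have m: "real (n+1) * integral {0..1} f \<le> real (n+1) * (\<Sum>k<n-1. I k)"
    using intle by (intro mult_left_mono) auto
  have "0 \<le> real (n+1) * integral {0..1} f" using intle by simp
  then show ?thesis unfolding phi_eq using m up by linarith
qed

end
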